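(* Let $Z_1^N$ be as in the context, started at $Z_1^N(0)=\lfloor \log N/\varphi_N\rfloor$. Then for every $T>0$ and $\delta>0$, $$\lim_{N\to\infty}\mathbb P\Big(\sup_{t\le T}\big|\log_N^+\big(Z_1^N(t\varphi_N^{-1}\log N)\big)-(b+at)\big|>\delta\Big)=0.$$
   Context: Standing assumptions: $a>0$, $0<\varphi_N\le1$, and $-\log_N\varphi_N\to b\in[0,1)$ as $N\to\infty$. $Z_1^N$ is a continuous-time Markov chain on $\mathbb N_0$ that jumps from $k$ to $k+1$ at rate $(1+a\varphi_N)k$ and from $k$ to $k-1$ at rate $k$. $\log_N^+(x):=\max\{\log x/\log N,0\}$ for $x>0$, $\log_N^+(0):=0$. *)

theory Defs
  imports "HOL-Probability.Probability"
begin

definition logN :: "nat \<Rightarrow> real \<Rightarrow> real" where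
  "logN N x = ln x / ln (real N)"

definition logN_plus :: "nat \<Rightarrow> real \<Rightarrow> real" where
  "logN_plus N x = (if x > 0 then max (logN N x) 0 else 0)"

definition noise :: "(real \<times> real) stream measure" where
  "noise = stream_space (density lborel (exponential_density 1)
                          \<Otimes>\<^sub>M uniform_measure lborel {0..1})"

text \<open>Embedded jump chain of the birth-death chain with birth rate (1+r)k and
  death rate k (here r = a * phi_N), started at z0.  State 0 is absorbing.\<close>
fun jchain :: "real \<Rightarrow> nat \<Rightarrow> (real \<times> real) stream \<Rightarrow> nat \<Rightarrow> nat" where
  "jchain r z0 \<omega> 0 = z0"
| "jchain r z0 \<omega> (Suc n) =
     (let k = jchain r z0 \<omega> n in
      if k = 0 then 0
      else if snd (\<omega> !! n) < (1 + r) / (2 + r) then k + 1 else k - 1)"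

text \<open>Holding time in the n-th visited state: Exp((2+r)k) (arbitrary once absorbed).\<close>
definition hold :: "real \<Rightarrow> nat \<Rightarrow> (real \<times> real) stream \<Rightarrow> nat \<Rightarrow> real" where
  "hold r z0 \<omega> n = (let k = jchain r z0 \<omega> n in
     if k = 0 then 1 else fst (\<omega> !! n) / ((2 + r) * real k))"

definition jtime :: "real \<Rightarrow> nat \<Rightarrow> (real \<times> real) stream \<Rightarrow> nat \<Rightarrow> real" where
  "jtime r z0 \<omega> n = (\<Sum>i<n. hold r z0 \<omega> i)"

text \<open>The continuous-time chain: value at time t \<ge> 0 (set to 0 after a possible
  explosion, a null event).\<close>
definition bd_chain :: "real \<Rightarrow> nat \<Rightarrow> (real \<times> real) stream \<Rightarrow> real \<Rightarrow> nat" where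
  "bd_chain r z0 \<omega> t =
     (if \<exists>n. t < jtime r z0 \<omega> (Suc n)
      then jchain r z0 \<omega> (LEAST n. t < jtime r z0 \<omega> (Suc n)) else 0)"

definition dev_event :: "real \<Rightarrow> real \<Rightarrow> real \<Rightarrow> real \<Rightarrow> (nat \<Rightarrow> real) \<Rightarrow> nat \<Rightarrow> (real \<times> real) stream set" where
  "dev_event a b T \<delta> \<phi> N =
     {\<omega> \<in> space noise. \<exists>t\<in>{0..T}.
        \<bar>logN_plus N (real (bd_chain (a * \<phi> N) (nat \<lfloor>ln (real N) / \<phi> N\<rfloor>) \<omega>
                              (t * ln (real N) / \<phi> N))) - (b + a * t)\<bar> > \<delta>}"

end

theory Submission
  imports Defs
begin

primrec st :: "('s \<Rightarrow> 'w \<Rightarrow> 's) \<Rightarrow> 's \<Rightarrow> 'w stream \<Rightarrow> nat \<Rightarrow> 's" where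
  "st F s \<omega> 0 = s"
| "st F s \<omega> (Suc n) = F (st F s \<omega> n) (\<omega> !! n)"

lemma st_shift: "st F s \<omega> (Suc n) = st F (F s (shd \<omega>)) (stl \<omega>) n"
  by (induction n) auto

lemma st_meas:
  assumes Fm: "(\<lambda>(s,w). F s w) \<in> SM \<Otimes>\<^sub>M M \<rightarrow>\<^sub>M SM" and s: "s \<in> space SM"
  shows "(\<lambda>\<omega>. st F s \<omega> n) \<in> stream_space M \<rightarrow>\<^sub>M SM"
proof (induction n)
  case 0 then show ?case using s by simp
next
  case (Suc n)
  have "(\<lambda>\<omega>. (st F s \<omega> n, \<omega> !! n)) \<in> stream_space M \<rightarrow>\<^sub>M SM \<Otimes>\<^sub>M M"
    using Suc by (intro measurable_Pair) auto
  from measurable_comp[OF this Fm] show ?case by (simp add: o_def)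
qed

lemma section_meas:
  assumes M: "prob_space M" and Am: "A \<in> sets (stream_space M)"
  shows "(\<lambda>t. emeasure (stream_space M) {x \<in> space (stream_space M). t ## x \<in> A}) \<in> borel_measurable M"
proof -
  interpret prob_space M by fact
  interpret SP: prob_space "stream_space M" by (rule prob_space_stream_space)
  let ?SS = "stream_space M"
  define Q where "Q = (\<lambda>p. fst p ## snd p) -` A \<inter> space (M \<Otimes>\<^sub>M ?SS)"
  have "(\<lambda>p. fst p ## snd p) \<in> M \<Otimes>\<^sub>M ?SS \<rightarrow>\<^sub>M ?SS" by measurable
  from measurable_sets[OF this Am] have Qm: "Q \<in> sets (M \<Otimes>\<^sub>M ?SS)" unfolding Q_def .
  have "{x \<in> space ?SS. t ## x \<in> A} = Pair t -` Q" for t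
    using sets.sets_into_space[OF Am]
    unfolding Q_def apply (auto simp: space_pair_measure space_stream_space) by (metis subsetD streams_Stream)
  then show ?thesis using SP.measurable_emeasure_Pair[OF Qm] by simp
qed

lemma ville_fin:
  assumes M: "prob_space M"
  and Fm: "(\<lambda>(s,w). F s w) \<in> SM \<Otimes>\<^sub>M M \<rightarrow>\<^sub>M SM"
  and Vm: "V \<in> borel_measurable SM"
  and Sinv: "\<And>s w. s \<in> S \<Longrightarrow> w \<in> space M \<Longrightarrow> F s w \<in> S"
  and SSM: "S \<subseteq> space SM"
  and sup: "\<And>s. s \<in> S \<Longrightarrow> (\<integral>\<^sup>+w. V (F s w) \<partial>M) \<le> V s"
  and s: "s \<in> S"
  shows "lam * emeasure (stream_space M) {\<omega> \<in> space (stream_space M). \<exists>n\<le>K. lam \<le> V (st F s \<omega> n)} \<le> V s"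
  using s
proof (induction K arbitrary: s)
  interpret prob_space M by fact
  interpret SP: prob_space "stream_space M" by (rule prob_space_stream_space)
  case 0
  show ?case
  proof (cases "lam \<le> V s")
    case True
    have "lam * emeasure (stream_space M) {\<omega> \<in> space (stream_space M). \<exists>n\<le>0. lam \<le> V (st F s \<omega> n)} \<le> lam * 1"
      by (intro mult_left_mono) (auto simp: SP.emeasure_le_1)
    then show ?thesis using True by simp
  next
    case False then show ?thesis by simp
  qed
next
  interpret prob_space M by fact
  interpret SP: prob_space "stream_space M" by (rule prob_space_stream_space)
  case (Suc K)
  have meas: "\<And>s K. s \<in> S \<Longrightarrow> {\<omega> \<in> space (stream_space M). \<exists>n\<le>K. lam \<le> V (st F s \<omega> n)} \<in> sets (stream_space M)"
  proof -
    fix s K assume "s \<in> S"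
    then have [measurable]: "\<And>n. (\<lambda>\<omega>. V (st F s \<omega> n)) \<in> borel_measurable (stream_space M)"
      using st_meas[OF Fm] Vm SSM by (intro measurable_compose[OF _ Vm]) auto
    show "{\<omega> \<in> space (stream_space M). \<exists>n\<le>K. lam \<le> V (st F s \<omega> n)} \<in> sets (stream_space M)"
      by measurable
  qed
  let ?SS = "stream_space M"
  let ?A = "{\<omega> \<in> space ?SS. \<exists>n\<le>Suc K. lam \<le> V (st F s \<omega> n)}"
  show ?case
  proof (cases "lam \<le> V s")
    case True
    have "lam * emeasure ?SS ?A \<le> lam * 1"
      by (intro mult_left_mono) (auto simp: SP.emeasure_le_1)
    then show ?thesis using True by simp
  next
    case False
    have Am: "?A \<in> sets ?SS" using meas[OF Suc.prems] .
    define g where "g t = emeasure ?SS {x \<in> space ?SS. t ## x \<in> ?A}" for t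
    have e1: "emeasure ?SS ?A = (\<integral>\<^sup>+t. g t \<partial>M)"
      unfolding g_def by (rule emeasure_stream_space[OF Am])
    have gm: "g \<in> borel_measurable M"
      unfolding g_def by (rule section_meas[OF M Am])
    have gt: "g t = emeasure ?SS {\<omega> \<in> space ?SS. \<exists>n\<le>K. lam \<le> V (st F (F s t) \<omega> n)}"
      if t: "t \<in> space M" for t
    proof -
      have "{x \<in> space ?SS. t ## x \<in> ?A} = {\<omega> \<in> space ?SS. \<exists>n\<le>K. lam \<le> V (st F (F s t) \<omega> n)}"
      proof (intro Collect_cong conj_cong refl)
        fix x assume x: "x \<in> space ?SS"
        then have tx: "t ## x \<in> space ?SS" using t by (simp add: space_stream_space)
        have "(\<exists>n\<le>Suc K. lam \<le> V (st F s (t ## x) n)) \<longleftrightarrow> (\<exists>m\<le>K. lam \<le> V (st F s (t ## x) (Suc m)))"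
        proof
          assume "\<exists>n\<le>Suc K. lam \<le> V (st F s (t ## x) n)"
          then obtain n where n: "n \<le> Suc K" "lam \<le> V (st F s (t ## x) n)" by blast
          then show "\<exists>m\<le>K. lam \<le> V (st F s (t ## x) (Suc m))"
            using False by (cases n) auto
        next
          assume "\<exists>m\<le>K. lam \<le> V (st F s (t ## x) (Suc m))"
          then show "\<exists>n\<le>Suc K. lam \<le> V (st F s (t ## x) n)" by (meson Suc_le_mono)
        qed
        also have "\<dots> \<longleftrightarrow> (\<exists>m\<le>K. lam \<le> V (st F (F s t) x m))"
          by (simp only: st_shift stream.sel)
        finally show "t ## x \<in> ?A \<longleftrightarrow> (\<exists>n\<le>K. lam \<le> V (st F (F s t) x n))"
          using tx by simp
      qed
      then show ?thesis unfolding g_def by simp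
    qed
    have "lam * emeasure ?SS ?A = (\<integral>\<^sup>+t. lam * g t \<partial>M)"
      unfolding e1 by (rule nn_integral_cmult[OF gm, symmetric])
    also have "\<dots> \<le> (\<integral>\<^sup>+t. V (F s t) \<partial>M)"
      by (intro nn_integral_mono) (simp add: gt Suc.IH Sinv Suc.prems)
    also have "\<dots> \<le> V s" by (rule sup[OF Suc.prems])
    finally show ?thesis .
  qed
qed
lemma ville:
  assumes M: "prob_space M"
  and Fm: "(\<lambda>(s,w). F s w) \<in> SM \<Otimes>\<^sub>M M \<rightarrow>\<^sub>M SM"
  and Vm: "V \<in> borel_measurable SM"
  and Sinv: "\<And>s w. s \<in> S \<Longrightarrow> w \<in> space M \<Longrightarrow> F s w \<in> S"
  and SSM: "S \<subseteq> space SM"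
  and sup: "\<And>s. s \<in> S \<Longrightarrow> (\<integral>\<^sup>+w. V (F s w) \<partial>M) \<le> V s"
  and s: "s \<in> S"
  shows "lam * emeasure (stream_space M) {\<omega> \<in> space (stream_space M). \<exists>n. lam \<le> V (st F s \<omega> n)} \<le> V s"
proof -
  let ?SS = "stream_space M"
  define A where "A K = {\<omega> \<in> space ?SS. \<exists>n\<le>K. lam \<le> V (st F s \<omega> n)}" for K
  have [measurable]: "\<And>n. (\<lambda>\<omega>. V (st F s \<omega> n)) \<in> borel_measurable ?SS"
    using st_meas[OF Fm] Vm SSM s by (intro measurable_compose[OF _ Vm]) auto
  have Am: "range A \<subseteq> sets ?SS" unfolding A_def by auto
  have inc: "incseq A" unfolding A_def incseq_def by (auto intro: order_trans)
  have U: "(\<Union>K. A K) = {\<omega> \<in> space ?SS. \<exists>n. lam \<le> V (st F s \<omega> n)}"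
    unfolding A_def by auto
  have "lam * emeasure ?SS (\<Union>K. A K) = lam * (SUP K. emeasure ?SS (A K))"
    using SUP_emeasure_incseq[OF Am inc] by simp
  also have "\<dots> = (SUP K. lam * emeasure ?SS (A K))" by (rule SUP_mult_left_ennreal)
  also have "\<dots> \<le> V s"
    unfolding A_def by (intro SUP_least ville_fin[OF assms])
  finally show ?thesis unfolding U .
qed

abbreviation "M0 \<equiv> density lborel (exponential_density 1) \<Otimes>\<^sub>M uniform_measure lborel {0..1::real}"

lemma noise_eq: "noise = stream_space M0" unfolding noise_def ..

lemma prob_M0: "prob_space M0"
proof -
  interpret D: prob_space "density lborel (exponential_density 1)"
    by (rule prob_space_exponential_density) simp
  interpret U: prob_space "uniform_measure lborel {0..1::real}"
    by (rule prob_space_uniform_measure) auto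
  interpret P: pair_prob_space "density lborel (exponential_density 1)" "uniform_measure lborel {0..1::real}" ..
  show ?thesis by (rule P.prob_space_axioms)
qed

lemma sets_M0: "sets M0 = sets (borel \<Otimes>\<^sub>M borel)"
  by (intro sets_pair_measure_cong) auto

definition F1 :: "real \<Rightarrow> real \<times> real \<Rightarrow> real \<times> real \<Rightarrow> real \<times> real" where
  "F1 r s w = (if fst s = 0 then (0, snd s + 1) else
     (if snd w < (1+r)/(2+r) then fst s + 1 else fst s - 1, snd s + fst w / ((2+r) * fst s)))"

abbreviation "B2 \<equiv> (borel \<Otimes>\<^sub>M borel :: (real \<times> real) measure)"

lemma F1_meas: "(\<lambda>(s,w). F1 r s w) \<in> B2 \<Otimes>\<^sub>M M0 \<rightarrow>\<^sub>M B2"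
proof -
  have e: "sets (B2 \<Otimes>\<^sub>M M0) = sets (B2 \<Otimes>\<^sub>M B2)"
    using sets_M0 by (intro sets_pair_measure_cong) auto
  have "(\<lambda>p::(real\<times>real)\<times>(real\<times>real). F1 r (fst p) (snd p)) \<in> B2 \<Otimes>\<^sub>M B2 \<rightarrow>\<^sub>M B2"
    unfolding F1_def by measurable
  then show ?thesis by (subst measurable_cong_sets[OF e refl]) (simp add: case_prod_beta')
qed

lemma unif_if:
  assumes "0 \<le> p" "p \<le> 1"
  shows "(\<integral>\<^sup>+u. (if u < p then c1 else c2) \<partial>uniform_measure lborel {0..1::real}) = ennreal p * c1 + ennreal (1-p) * c2"
proof -
  let ?U = "uniform_measure lborel {0..1::real}"
  have "(\<integral>\<^sup>+u. (if u < p then c1 else c2) \<partial>?U) = (\<integral>\<^sup>+u. c1 * indicator {..<p} u + c2 * indicator {p..} u \<partial>?U)"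
    by (intro nn_integral_cong) (auto split: split_indicator)
  also have "\<dots> = (\<integral>\<^sup>+u. c1 * indicator {..<p} u \<partial>?U) + (\<integral>\<^sup>+u. c2 * indicator {p..} u \<partial>?U)"
    by (intro nn_integral_add) auto
  also have "\<dots> = c1 * emeasure ?U {..<p} + c2 * emeasure ?U {p..}"
    by (simp add: nn_integral_cmult_indicator)
  also have "emeasure ?U {..<p} = ennreal p"
  proof -
    have "{0..1::real} \<inter> {..<p} = {0..<p}" using assms by auto
    then show ?thesis using assms by (simp add: divide_ennreal_def)
  qed
  also have "emeasure ?U {p..} = ennreal (1-p)"
  proof -
    have "{0..1::real} \<inter> {p..} = {p..1}" using assms by auto
    then show ?thesis using assms by (simp add: divide_ennreal_def)
  qed
  finally show ?thesis by (simp add: mult.commute)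
qed

lemma exp_int:
  fixes k1 k2 \<alpha> \<beta> \<gamma> :: real
  assumes "0 \<le> k1" "0 \<le> k2" and nn: "\<And>e. 0 \<le> e \<Longrightarrow> 0 \<le> \<alpha>*exp(-k2*e) + \<beta>*exp(-k1*e) + \<gamma>"
  shows "(\<integral>\<^sup>+e. ennreal (\<alpha>*exp(-k2*e) + \<beta>*exp(-k1*e) + \<gamma>) \<partial>density lborel (exponential_density 1))
       = ennreal (\<alpha>/(1+k2) + \<beta>/(1+k1) + \<gamma>)"
proof -
  define h where "h e = \<alpha>*exp(-k2*e) + \<beta>*exp(-k1*e) + \<gamma>" for e
  define g where "g e = \<alpha>*exp(-(1+k2)*e) + \<beta>*exp(-(1+k1)*e) + \<gamma>*exp(-1*e)" for e
  define f where "f e = (if e \<in> {0..} then g e else 0)" for e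
  have fe: "f e = exponential_density 1 e * h e" for e
    by (auto simp: f_def g_def h_def exponential_density_def algebra_simps exp_add[symmetric])
  have "(\<integral>\<^sup>+e. ennreal (h e) \<partial>density lborel (exponential_density 1))
      = (\<integral>\<^sup>+e. ennreal (exponential_density 1 e) * ennreal (h e) \<partial>lborel)"
    by (subst nn_integral_density) (auto simp: h_def)
  also have "\<dots> = (\<integral>\<^sup>+e. ennreal (f e) \<partial>lborel)"
  proof (intro nn_integral_cong)
    fix e :: real
    show "ennreal (exponential_density 1 e) * ennreal (h e) = ennreal (f e)"
    proof (cases "e < 0")
      case True then show ?thesis by (simp add: fe exponential_density_def)
    next
      case False then show ?thesis
        using nn[of e] by (simp add: fe h_def ennreal_mult exponential_density_def)
    qed
  qed
  also have "\<dots> = ennreal (\<alpha>/(1+k2) + \<beta>/(1+k1) + \<gamma>)"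
  proof (rule nn_integral_has_integral_lborel)
    show "f \<in> borel_measurable borel" unfolding f_def g_def by measurable
    show "0 \<le> f e" for e
      using nn[of e] by (auto simp: fe h_def exponential_density_def)
    have i1: "((\<lambda>x::real. exp (-(1+k2)*x)) has_integral 1/(1+k2)) {0..}"
      using has_integral_exp_minus_to_infinity[of "1+k2" 0] assms by simp
    have i2: "((\<lambda>x::real. exp (-(1+k1)*x)) has_integral 1/(1+k1)) {0..}"
      using has_integral_exp_minus_to_infinity[of "1+k1" 0] assms by simp
    have i3: "((\<lambda>x::real. exp (-1*x)) has_integral 1) {0..}"
      using has_integral_exp_minus_to_infinity[of "1" 0] by simp
    have "(g has_integral (\<alpha>*(1/(1+k2)) + \<beta>*(1/(1+k1)) + \<gamma>*1)) {0..}"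
      unfolding g_def
      by (intro has_integral_add has_integral_mult_right i1 i2 i3)
    then have "(g has_integral (\<alpha>/(1+k2) + \<beta>/(1+k1) + \<gamma>)) {0..}" by simp
    then show "(f has_integral (\<alpha>/(1+k2) + \<beta>/(1+k1) + \<gamma>)) UNIV"
      unfolding f_def by (subst has_integral_restrict_UNIV)
  qed
  finally show ?thesis unfolding h_def .
qed

lemma alg1:
  fixes r x K Z0 :: real
  assumes r: "r > 0" and x: "x > 0"
  shows "K^2 * (((1+r)/(2+r)) * ((x+1)^2 + (2+r)/r*(x+1)) + (1 - (1+r)/(2+r)) * ((x-1)^2 + (2+r)/r*(x-1)))
           / (1 + 2*r/((2+r)*x))
         + (-2*Z0*K*(((1+r)/(2+r))*(x+1) + (1 - (1+r)/(2+r))*(x-1))) / (1 + r/((2+r)*x)) + Z0^2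
       = (x*K - Z0)^2 + (2+r)/r * x * K^2"
proof -
  have a: "2 + r \<noteq> 0" "r \<noteq> 0" "x \<noteq> 0" using r x by auto
  have b: "(2+r)*x + 2*r \<noteq> 0" "(2+r)*x + r \<noteq> 0" using r x
    by (smt (verit) mult_pos_pos)+
  have e1: "1 + 2*r/((2+r)*x) = ((2+r)*x + 2*r)/((2+r)*x)" using a by (simp add: divide_simps)
  have e2: "1 + r/((2+r)*x) = ((2+r)*x + r)/((2+r)*x)" using a by (simp add: divide_simps)
  have h1: "((1+r)/(2+r))*(x+1) + (1 - (1+r)/(2+r))*(x-1) = ((2+r)*x + r)/(2+r)"
    using a by (simp add: divide_simps) (simp add: algebra_simps)
  have h2: "((1+r)/(2+r)) * ((x+1)^2 + (2+r)/r*(x+1)) + (1 - (1+r)/(2+r)) * ((x-1)^2 + (2+r)/r*(x-1))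
      = (x + (2+r)/r) * ((2+r)*x + 2*r)/(2+r)"
    using a by (simp add: divide_simps) (simp add: algebra_simps power2_eq_square)
  have t2: "K^2 * ((x + (2+r)/r) * ((2+r)*x + 2*r)/(2+r)) / (((2+r)*x + 2*r)/((2+r)*x)) = K^2 * x * (x + (2+r)/r)"
    using a b by (simp add: divide_simps)
  have t1: "(-2*Z0*K*(((2+r)*x + r)/(2+r))) / (((2+r)*x + r)/((2+r)*x)) = -2*Z0*K*x"
    using a b by (simp add: divide_simps)
  show ?thesis unfolding e1 e2 h1 h2 t1 t2
    by (simp add: power2_eq_square algebra_simps)
qed

definition v1 :: "real \<Rightarrow> real \<Rightarrow> real \<times> real \<Rightarrow> real" where
  "v1 Z0 r s = (fst s * exp(-r* snd s) - Z0)^2 + (2+r)/r * fst s * exp(-2*r* snd s)"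

lemma v1_nn: "r > 0 \<Longrightarrow> fst s \<ge> 0 \<Longrightarrow> v1 Z0 r s \<ge> 0"
  unfolding v1_def by (intro add_nonneg_nonneg) (auto intro!: mult_nonneg_nonneg)

lemma v1_meas: "(\<lambda>s. ennreal (v1 Z0 r s)) \<in> borel_measurable B2"
  unfolding v1_def by measurable

lemma v1_sup:
  assumes r: "r > 0" and s: "fst s \<in> \<nat>"
  shows "(\<integral>\<^sup>+w. ennreal (v1 Z0 r (F1 r s w)) \<partial>M0) \<le> ennreal (v1 Z0 r s)"
proof -
  obtain x \<tau> where s_eq: "s = (x,\<tau>)" by (cases s)
  let ?D = "density lborel (exponential_density 1)"
  let ?U = "uniform_measure lborel {0..1::real}"
  interpret D: prob_space ?D by (rule prob_space_exponential_density) simp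
  interpret U: prob_space ?U by (rule prob_space_uniform_measure) auto
  interpret P: pair_prob_space ?D ?U ..
  obtain n where xn: "x = real n" using s by (auto simp: s_eq elim: Nats_cases)
  have meas: "(\<lambda>w. ennreal (v1 Z0 r (F1 r s w))) \<in> borel_measurable M0"
  proof -
    have "(\<lambda>w. F1 r s w) \<in> M0 \<rightarrow>\<^sub>M B2"
      using measurable_Pair2[OF F1_meas[of r], of s] by (simp add: space_pair_measure)
    from measurable_compose[OF this v1_meas] show ?thesis .
  qed
  show ?thesis
  proof (cases "x = 0")
    case True
    then have "\<And>w. F1 r s w = (0, \<tau>+1)" by (simp add: F1_def s_eq)
    then have "(\<integral>\<^sup>+w. ennreal (v1 Z0 r (F1 r s w)) \<partial>M0) = ennreal (Z0^2)"
      by (simp add: v1_def P.emeasure_space_1)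
    also have "\<dots> = ennreal (v1 Z0 r s)" by (simp add: v1_def s_eq True)
    finally show ?thesis by simp
  next
    case False
    then have x1: "x \<ge> 1" using xn by simp
    define A where "A = (2+r)*x"
    define p where "p = (1+r)/(2+r)"
    define C where "C = (2+r)/r"
    define K where "K = exp(-r*\<tau>)"
    define \<alpha> where "\<alpha> = K^2 * (p*((x+1)^2 + C*(x+1)) + (1-p)*((x-1)^2 + C*(x-1)))"
    define \<beta> where "\<beta> = -2*Z0*K*(p*(x+1) + (1-p)*(x-1))"
    have p01: "0 \<le> p" "p \<le> 1" using r by (auto simp: p_def)
    have Apos: "A > 0" using r x1 by (simp add: A_def)
    have F1e: "F1 r s (e,u) = (if u < p then (x+1, \<tau> + e/A) else (x-1, \<tau> + e/A))" for e u
      using False by (simp add: F1_def s_eq p_def A_def)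
    have pw: "p * v1 Z0 r (x+1, \<tau> + e/A) + (1-p) * v1 Z0 r (x-1, \<tau> + e/A)
        = \<alpha> * exp(-(2*r/A)*e) + \<beta> * exp(-(r/A)*e) + Z0^2" for e
    proof -
      have ex1: "exp(-r*(\<tau>+e/A)) = K*exp(-(r/A)*e)"
        by (simp add: K_def exp_add[symmetric] algebra_simps)
      have ex2: "exp(-2*r*(\<tau>+e/A)) = K^2*exp(-(r/A)*e)^2"
        by (simp add: K_def power2_eq_square exp_add[symmetric] algebra_simps)
      have ex3: "exp(-(2*r/A)*e) = exp(-(r/A)*e)^2"
        by (simp add: power2_eq_square exp_add[symmetric] algebra_simps)
      show ?thesis unfolding v1_def fst_conv snd_conv ex1 ex2 ex3 \<alpha>_def \<beta>_def C_def[symmetric]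
        by (simp add: algebra_simps power2_eq_square)
    qed
    have nnv: "0 \<le> v1 Z0 r (x+1, t)" "0 \<le> v1 Z0 r (x-1, t)" for t
      using x1 r by (auto intro!: v1_nn)
    have "(\<integral>\<^sup>+w. ennreal (v1 Z0 r (F1 r s w)) \<partial>M0)
        = (\<integral>\<^sup>+e. \<integral>\<^sup>+u. ennreal (v1 Z0 r (F1 r s (e,u))) \<partial>?U \<partial>?D)"
      using U.nn_integral_fst[OF meas] by simp
    also have "\<dots> = (\<integral>\<^sup>+e. ennreal (p * v1 Z0 r (x+1, \<tau> + e/A) + (1-p) * v1 Z0 r (x-1, \<tau> + e/A)) \<partial>?D)"
    proof (intro nn_integral_cong)
      fix e
      have "(\<integral>\<^sup>+u. ennreal (v1 Z0 r (F1 r s (e,u))) \<partial>?U)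
         = (\<integral>\<^sup>+u. (if u < p then ennreal (v1 Z0 r (x+1, \<tau> + e/A)) else ennreal (v1 Z0 r (x-1, \<tau> + e/A))) \<partial>?U)"
        by (intro nn_integral_cong) (simp add: F1e)
      also have "\<dots> = ennreal p * ennreal (v1 Z0 r (x+1, \<tau> + e/A)) + ennreal (1-p) * ennreal (v1 Z0 r (x-1, \<tau> + e/A))"
        by (rule unif_if[OF p01])
      also have "\<dots> = ennreal (p * v1 Z0 r (x+1, \<tau> + e/A) + (1-p) * v1 Z0 r (x-1, \<tau> + e/A))"
        using p01 nnv by (simp add: ennreal_mult ennreal_plus)
      finally show "(\<integral>\<^sup>+u. ennreal (v1 Z0 r (F1 r s (e,u))) \<partial>?U) = ennreal (p * v1 Z0 r (x+1, \<tau> + e/A) + (1-p) * v1 Z0 r (x-1, \<tau> + e/A))" .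
    qed
    also have "\<dots> = (\<integral>\<^sup>+e. ennreal (\<alpha> * exp(-(2*r/A)*e) + \<beta> * exp(-(r/A)*e) + Z0^2) \<partial>?D)"
      by (simp only: pw)
    also have "\<dots> = ennreal (\<alpha>/(1+2*r/A) + \<beta>/(1+r/A) + Z0^2)"
    proof (rule exp_int)
      show "0 \<le> r/A" "0 \<le> 2*r/A" using r Apos by auto
      show "0 \<le> \<alpha> * exp(-(2*r/A)*e) + \<beta> * exp(-(r/A)*e) + Z0^2" for e
        unfolding pw[symmetric] using nnv p01 by (auto intro!: add_nonneg_nonneg mult_nonneg_nonneg)
    qed
    also have "\<alpha>/(1+2*r/A) + \<beta>/(1+r/A) + Z0^2 = v1 Z0 r s"
    proof -
      have "\<alpha>/(1+2*r/A) + \<beta>/(1+r/A) + Z0^2 = (x*K - Z0)^2 + (2+r)/r * x * K^2"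
        unfolding \<alpha>_def \<beta>_def p_def C_def A_def
        using alg1[OF r, of x K Z0] x1 by simp
      also have "\<dots> = v1 Z0 r s"
        by (simp add: v1_def s_eq K_def power2_eq_square exp_add[symmetric] algebra_simps)
      finally show ?thesis .
    qed
    finally show ?thesis by simp
  qed
qed

definition F2 :: "real \<times> real \<times> real \<Rightarrow> real \<times> real \<Rightarrow> real \<times> real \<times> real" where
  "F2 s w = (fst s + fst w, fst (snd s) + 1, if fst w < 0 then 1 else snd (snd s))"

definition V2 :: "real \<times> real \<times> real \<Rightarrow> ennreal" where
  "V2 s = (if snd (snd s) > 0 then \<infinity> else ennreal (2 powr fst (snd s) * exp (- fst s)))"

abbreviation "B3 \<equiv> (borel \<Otimes>\<^sub>M (borel \<Otimes>\<^sub>M borel) :: (real \<times> real \<times> real) measure)"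

lemma F2_meas: "(\<lambda>(s,w). F2 s w) \<in> B3 \<Otimes>\<^sub>M M0 \<rightarrow>\<^sub>M B3"
proof -
  have e: "sets (B3 \<Otimes>\<^sub>M M0) = sets (B3 \<Otimes>\<^sub>M B2)"
    using sets_M0 by (intro sets_pair_measure_cong) auto
  have "(\<lambda>p::(real\<times>real\<times>real)\<times>(real\<times>real). F2 (fst p) (snd p)) \<in> B3 \<Otimes>\<^sub>M B2 \<rightarrow>\<^sub>M B3"
    unfolding F2_def by measurable
  then show ?thesis by (subst measurable_cong_sets[OF e refl]) (simp add: case_prod_beta')
qed

lemma V2_meas: "V2 \<in> borel_measurable B3"
  unfolding V2_def by measurable

lemma V2_sup: "(\<integral>\<^sup>+w. V2 (F2 s w) \<partial>M0) \<le> V2 s"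
proof (cases "snd (snd s) > 0")
  case True then show ?thesis by (simp add: V2_def)
next
  case False
  let ?D = "density lborel (exponential_density 1)"
  let ?U = "uniform_measure lborel {0..1::real}"
  interpret D: prob_space ?D by (rule prob_space_exponential_density) simp
  interpret U: prob_space ?U by (rule prob_space_uniform_measure) auto
  interpret P: pair_prob_space ?D ?U ..
  define c where "c = 2 powr (fst (snd s) + 1) * exp (- fst s)"
  have meas: "(\<lambda>w. V2 (F2 s w)) \<in> borel_measurable M0"
  proof -
    have "(\<lambda>w. F2 s w) \<in> M0 \<rightarrow>\<^sub>M B3"
      using measurable_Pair2[OF F2_meas, of s] by (simp add: space_pair_measure)
    from measurable_compose[OF this V2_meas] show ?thesis .
  qed
  have g: "V2 (F2 s (e,u)) = (if e < 0 then \<infinity> else ennreal (c * exp (-1*e)))" for e u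
    using False by (simp add: V2_def F2_def c_def exp_add[symmetric] exp_minus_inverse algebra_simps mult_exp_exp)
  have "(\<integral>\<^sup>+w. V2 (F2 s w) \<partial>M0) = (\<integral>\<^sup>+e. \<integral>\<^sup>+u. V2 (F2 s (e,u)) \<partial>?U \<partial>?D)"
    using U.nn_integral_fst[OF meas] by simp
  also have "\<dots> = (\<integral>\<^sup>+e. (if e < 0 then \<infinity> else ennreal (c * exp (-1*e))) \<partial>?D)"
    by (simp add: g U.emeasure_space_1)
  also have "\<dots> = (\<integral>\<^sup>+e. ennreal (0 * exp(-0*e) + c * exp (-1*e) + 0) \<partial>?D)"
  proof (rule nn_integral_cong_AE)
    have "AE e in ?D. 0 \<le> e"
      by (subst AE_density) (auto simp: exponential_density_def intro!: AE_I2)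
    then show "AE e in ?D. (if e < 0 then \<infinity> else ennreal (c * exp (-1*e))) = ennreal (0 * exp(-0*e) + c * exp (-1*e) + 0)"
      by eventually_elim auto
  qed
  also have "\<dots> = ennreal (0/(1+0) + c/(1+1) + 0)"
    by (rule exp_int) (auto simp: c_def)
  also have "\<dots> = V2 s"
    using False by (simp add: V2_def c_def powr_add)
  finally show ?thesis by simp
qed

lemma st1_eq: "st (F1 r) (real z0, 0) \<omega> n = (real (jchain r z0 \<omega> n), jtime r z0 \<omega> n)"
proof (induction n)
  case 0 then show ?case by (simp add: jtime_def)
next
  case (Suc n)
  have "st (F1 r) (real z0, 0) \<omega> (Suc n) = F1 r (real (jchain r z0 \<omega> n), jtime r z0 \<omega> n) (\<omega> !! n)"
    by (simp only: st.simps Suc)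
  also have "\<dots> = (real (jchain r z0 \<omega> (Suc n)), jtime r z0 \<omega> (Suc n))"
    by (simp add: F1_def jtime_def hold_def Let_def of_nat_diff)
  finally show ?case .
qed

lemma st2_eq: "st F2 (0,0,0) \<omega> n = ((\<Sum>j<n. fst (\<omega> !! j)), real n, if \<exists>j<n. fst (\<omega> !! j) < 0 then 1 else 0)"
proof (induction n)
  case 0 then show ?case by simp
next
  case (Suc n)
  have "st F2 (0,0,0) \<omega> (Suc n) = F2 ((\<Sum>j<n. fst (\<omega> !! j)), real n, if \<exists>j<n. fst (\<omega> !! j) < 0 then 1 else 0) (\<omega> !! n)"
    by (simp only: st.simps Suc)
  also have "\<dots> = ((\<Sum>j<Suc n. fst (\<omega> !! j)), real (Suc n), if \<exists>j<Suc n. fst (\<omega> !! j) < 0 then 1 else 0)"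
    by (auto simp: F2_def less_Suc_eq)
  finally show ?case .
qed

lemma X_meas: "(\<lambda>\<omega>. real (jchain r z0 \<omega> n)) \<in> borel_measurable noise"
  and T_meas: "(\<lambda>\<omega>. jtime r z0 \<omega> n) \<in> borel_measurable noise"
proof -
  have "(\<lambda>\<omega>. st (F1 r) (real z0, 0) \<omega> n) \<in> noise \<rightarrow>\<^sub>M B2"
    unfolding noise_eq by (rule st_meas[OF F1_meas]) (simp add: space_pair_measure)
  then have "(\<lambda>\<omega>. (real (jchain r z0 \<omega> n), jtime r z0 \<omega> n)) \<in> noise \<rightarrow>\<^sub>M B2"
    by (simp add: st1_eq)
  then show "(\<lambda>\<omega>. real (jchain r z0 \<omega> n)) \<in> borel_measurable noise"
    and "(\<lambda>\<omega>. jtime r z0 \<omega> n) \<in> borel_measurable noise"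
    by (auto simp: measurable_pair_iff o_def)
qed

lemma bd_real_eq: "real (bd_chain r z0 \<omega> s) =
  (if \<exists>n. s < jtime r z0 \<omega> (Suc n) then real (jchain r z0 \<omega> (LEAST n. s < jtime r z0 \<omega> (Suc n))) else 0)"
  unfolding bd_chain_def by simp

lemma bd_meas: "(\<lambda>\<omega>. real (bd_chain r z0 \<omega> s)) \<in> borel_measurable noise"
proof -
  note [measurable] = X_meas T_meas
  show ?thesis unfolding bd_real_eq by measurable
qed

lemma logN_plus_meas[measurable]: "logN_plus N \<in> borel_measurable borel"
  unfolding logN_plus_def logN_def by measurable

lemma pt_meas: "{\<omega> \<in> space noise. \<bar>logN_plus N (real (bd_chain r z0 \<omega> s)) - c\<bar> > d} \<in> sets noise"
proof -
  note [measurable] = bd_meas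
  show ?thesis by measurable
qed

lemma bd_rcont: "\<exists>\<epsilon>>0. \<forall>s'. s \<le> s' \<and> s' < s + \<epsilon> \<longrightarrow> bd_chain r z0 \<omega> s' = bd_chain r z0 \<omega> s"
proof (cases "\<exists>n. s < jtime r z0 \<omega> (Suc n)")
  case True
  define n0 where "n0 = (LEAST n. s < jtime r z0 \<omega> (Suc n))"
  have n0: "s < jtime r z0 \<omega> (Suc n0)" using True unfolding n0_def by (rule LeastI_ex)
  have n0m: "\<And>m. m < n0 \<Longrightarrow> jtime r z0 \<omega> (Suc m) \<le> s"
    unfolding n0_def using not_less_Least by force
  show ?thesis
  proof (intro exI conjI allI impI)
    show "0 < jtime r z0 \<omega> (Suc n0) - s" using n0 by simp
    fix s' assume s': "s \<le> s' \<and> s' < s + (jtime r z0 \<omega> (Suc n0) - s)"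
    have "(LEAST n. s' < jtime r z0 \<omega> (Suc n)) = n0"
    proof (rule Least_equality)
      show "s' < jtime r z0 \<omega> (Suc n0)" using s' by simp
      fix m assume "s' < jtime r z0 \<omega> (Suc m)"
      then show "n0 \<le> m" using n0m s' by (meson leI less_le_trans not_less)
    qed
    moreover have "\<exists>n. s' < jtime r z0 \<omega> (Suc n)" using s' by auto
    ultimately show "bd_chain r z0 \<omega> s' = bd_chain r z0 \<omega> s"
      using True unfolding bd_chain_def n0_def by simp
  qed
next
  case False
  show ?thesis
  proof (intro exI conjI allI impI)
    show "(0::real) < 1" by simp
    fix s' assume s': "s \<le> s' \<and> s' < s + 1"
    then have "\<not> (\<exists>n. s' < jtime r z0 \<omega> (Suc n))" using False order.strict_trans1 by blast
    then show "bd_chain r z0 \<omega> s' = bd_chain r z0 \<omega> s"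
      using False unfolding bd_chain_def by simp
  qed
qed

lemma countable_reduce:
  fixes g :: "real \<Rightarrow> nat" and h :: "nat \<Rightarrow> real"
  assumes rc: "\<And>t. \<exists>\<epsilon>>0. \<forall>t'. t \<le> t' \<and> t' < t + \<epsilon> \<longrightarrow> g t' = g t"
  shows "(\<exists>t\<in>{0..T}. \<bar>h (g t) - (b + a*t)\<bar> > d) \<longleftrightarrow> (\<exists>t\<in>{0..T} \<inter> (\<rat> \<union> {T}). \<bar>h (g t) - (b + a*t)\<bar> > d)"
proof
  assume "\<exists>t\<in>{0..T}. \<bar>h (g t) - (b + a*t)\<bar> > d"
  then obtain t where t: "t \<in> {0..T}" "\<bar>h (g t) - (b + a*t)\<bar> > d" by blast
  show "\<exists>t\<in>{0..T} \<inter> (\<rat> \<union> {T}). \<bar>h (g t) - (b + a*t)\<bar> > d"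
  proof (cases "t = T")
    case True then show ?thesis using t by auto
  next
    case False
    then have tT: "t < T" using t by auto
    obtain \<epsilon> where e: "\<epsilon> > 0" "\<And>t'. t \<le> t' \<Longrightarrow> t' < t + \<epsilon> \<Longrightarrow> g t' = g t"
      using rc[of t] by blast
    define c where "c = h (g t)"
    define \<eta> where "\<eta> = (\<bar>c - (b + a*t)\<bar> - d) / (\<bar>a\<bar> + 1)"
    have eta: "\<eta> > 0" using t unfolding \<eta>_def c_def by (simp add: add_pos_nonneg)
    define u where "u = min (t + \<epsilon>) (min (t + \<eta>) T)"
    have "t < u" using e eta tT by (simp add: u_def)
    then obtain q where q: "q \<in> \<rat>" "t < q" "q < u" using Rats_dense_in_real by blast
    have qe: "q < t + \<epsilon>" "q < t + \<eta>" "q < T" using q(3) unfolding u_def by simp_all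
    have gq: "g q = g t" using e(2)[of q] q(2) qe(1) by simp
    have "\<bar>a\<bar> * (q - t) \<le> \<bar>a\<bar> * \<eta>" using qe(2) by (intro mult_left_mono) auto
    also have "\<dots> < \<bar>c - (b + a*t)\<bar> - d"
    proof -
      have "\<bar>a\<bar> * \<eta> = (\<bar>c - (b + a*t)\<bar> - d) * (\<bar>a\<bar> / (\<bar>a\<bar> + 1))" unfolding \<eta>_def by simp
      also have "\<dots> < (\<bar>c - (b + a*t)\<bar> - d) * 1"
        using t by (intro mult_strict_left_mono) (auto simp: c_def)
      finally show ?thesis by simp
    qed
    finally have "\<bar>a\<bar> * (q - t) < \<bar>c - (b + a*t)\<bar> - d" .
    moreover have "\<bar>c - (b + a*t)\<bar> \<le> \<bar>c - (b + a*q)\<bar> + \<bar>a\<bar> * (q - t)"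
    proof -
      have "c - (b + a*t) = (c - (b + a*q)) + a * (q - t)" by (simp add: algebra_simps)
      then have "\<bar>c - (b + a*t)\<bar> \<le> \<bar>c - (b + a*q)\<bar> + \<bar>a * (q - t)\<bar>" by (metis abs_triangle_ineq)
      also have "\<bar>a * (q - t)\<bar> = \<bar>a\<bar> * (q - t)" using q(2) by (simp add: abs_mult)
      finally show ?thesis .
    qed
    ultimately have "\<bar>h (g q) - (b + a*q)\<bar> > d" using gq c_def by simp
    moreover have "q \<in> {0..T}" using q(2) qe(3) t(1) by simp
    ultimately show ?thesis using q by blast
  qed
next
  assume "\<exists>t\<in>{0..T} \<inter> (\<rat> \<union> {T}). \<bar>h (g t) - (b + a*t)\<bar> > d"
  then show "\<exists>t\<in>{0..T}. \<bar>h (g t) - (b + a*t)\<bar> > d" by blast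
qed

lemma dev_meas:
  assumes phi: "\<phi> N > 0"
  shows "dev_event a b T \<delta> \<phi> N \<in> sets noise"
proof -
  define \<kappa> where "\<kappa> = ln (real N) / \<phi> N"
  have kap: "\<kappa> \<ge> 0" unfolding \<kappa>_def using phi by (cases N) auto
  define r where "r = a * \<phi> N"
  define z0 where "z0 = nat \<lfloor>ln (real N) / \<phi> N\<rfloor>"
  have tk: "t * ln (real N) / \<phi> N = t * \<kappa>" for t unfolding \<kappa>_def by simp
  have rc: "\<exists>\<epsilon>>0. \<forall>t'. t \<le> t' \<and> t' < t + \<epsilon> \<longrightarrow> bd_chain r z0 \<omega> (t' * \<kappa>) = bd_chain r z0 \<omega> (t * \<kappa>)" for t \<omega>
  proof -
    obtain \<epsilon> where e: "\<epsilon> > 0" "\<And>s'. t * \<kappa> \<le> s' \<and> s' < t * \<kappa> + \<epsilon> \<Longrightarrow> bd_chain r z0 \<omega> s' = bd_chain r z0 \<omega> (t * \<kappa>)"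
      using bd_rcont[of "t * \<kappa>" r z0 \<omega>] by blast
    show ?thesis
    proof (intro exI conjI allI impI)
      show "\<epsilon> / (\<kappa> + 1) > 0" using e kap by simp
      fix t' assume t': "t \<le> t' \<and> t' < t + \<epsilon> / (\<kappa> + 1)"
      have "(t' - t) * \<kappa> \<le> (\<epsilon> / (\<kappa> + 1)) * \<kappa>" using t' kap by (intro mult_right_mono) auto
      also have "\<dots> < \<epsilon>" using e kap by (simp add: field_simps)
      finally have "t' * \<kappa> < t * \<kappa> + \<epsilon>" by (simp add: algebra_simps)
      moreover have "t * \<kappa> \<le> t' * \<kappa>" using t' kap by (intro mult_right_mono) auto
      ultimately show "bd_chain r z0 \<omega> (t' * \<kappa>) = bd_chain r z0 \<omega> (t * \<kappa>)" using e by blast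
    qed
  qed
  have "dev_event a b T \<delta> \<phi> N = (\<Union>t\<in>{0..T} \<inter> (\<rat> \<union> {T}).
     {\<omega> \<in> space noise. \<bar>logN_plus N (real (bd_chain r z0 \<omega> (t * \<kappa>))) - (b + a * t)\<bar> > \<delta>})"
  proof -
    have "\<And>\<omega>. (\<exists>t\<in>{0..T}. \<bar>logN_plus N (real (bd_chain r z0 \<omega> (t * \<kappa>))) - (b + a * t)\<bar> > \<delta>)
      \<longleftrightarrow> (\<exists>t\<in>{0..T} \<inter> (\<rat> \<union> {T}). \<bar>logN_plus N (real (bd_chain r z0 \<omega> (t * \<kappa>))) - (b + a * t)\<bar> > \<delta>)"
      by (rule countable_reduce[where g = "\<lambda>t. bd_chain r z0 _ (t * \<kappa>)" and h = "\<lambda>k. logN_plus N (real k)"]) (rule rc)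
    then show ?thesis unfolding dev_event_def tk r_def[symmetric] z0_def[symmetric] by blast
  qed
  also have "\<dots> \<in> sets noise"
  proof (rule sets.countable_UN'')
    show "countable ({0..T} \<inter> (\<rat> \<union> {T}))"
      by (intro countable_Int2 countable_Un countable_rat) auto
    show "{\<omega> \<in> space noise. \<bar>logN_plus N (real (bd_chain r z0 \<omega> (t * \<kappa>))) - (b + a * t)\<bar> > \<delta>} \<in> sets noise" for t
      by (rule pt_meas)
  qed
  finally show ?thesis .
qed

lemma det:
  fixes r Z0 s lam :: real and z0 :: nat
  assumes r: "r > 0" and Z0: "Z0 = real z0" "Z0 > 0" and s: "s \<ge> 0"
  and G1: "\<And>n. v1 Z0 r (real (jchain r z0 \<omega> n), jtime r z0 \<omega> n) < Z0^2/4"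
  and G2: "\<And>n. V2 (st F2 (0,0,0) \<omega> n) < ennreal lam"
  shows "Z0/4 * exp(r * s) \<le> real (bd_chain r z0 \<omega> s) \<and> real (bd_chain r z0 \<omega> s) \<le> 3/2*Z0*exp(r * s)"
proof -
  define X where "X n = real (jchain r z0 \<omega> n)" for n
  define \<tau> where "\<tau> n = jtime r z0 \<omega> n" for n
  have Mb: "Z0/2 < X n * exp(-r*\<tau> n) \<and> X n * exp(-r*\<tau> n) < 3/2*Z0" for n
  proof -
    define y where "y = X n * exp(-r*\<tau> n) - Z0"
    have "0 \<le> (2+r)/r * X n * exp(-2*r*\<tau> n)" using r by (simp add: X_def)
    moreover have "y^2 + (2+r)/r * X n * exp(-2*r*\<tau> n) < Z0^2/4"
      using G1[of n] unfolding v1_def y_def X_def \<tau>_def by (simp only: fst_conv snd_conv)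
    ultimately have "y^2 < Z0^2/4" by linarith
    have "\<bar>y\<bar> < Z0/2"
    proof (rule ccontr)
      assume "\<not> \<bar>y\<bar> < Z0/2"
      then have "(Z0/2)^2 \<le> \<bar>y\<bar>^2" using Z0 by (intro power_mono) auto
      then show False using \<open>y^2 < Z0^2/4\<close> by (simp add: power_divide)
    qed
    then show ?thesis unfolding y_def by linarith
  qed
  have Xpos: "X n > 0" for n
  proof -
    have "X n * exp(-r*\<tau> n) > 0" using Mb[of n] Z0 by linarith
    moreover have "X n \<ge> 0" by (simp add: X_def)
    ultimately show ?thesis by (metis less_eq_real_def mult_zero_left less_irrefl)
  qed
  have jpos: "jchain r z0 \<omega> n \<noteq> 0" for n using Xpos[of n] by (simp add: X_def)
  have Xexp: "X n = (X n * exp(-r*\<tau> n)) * exp(r*\<tau> n)" for n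
    by (simp add: exp_minus_inverse mult.assoc[symmetric] exp_add[symmetric])
  have Xup: "X n < 3/2*Z0*exp(r*\<tau> n)" and Xlo: "Z0/2*exp(r*\<tau> n) < X n" for n
    using Mb[of n] by (subst Xexp; simp)+
  have E2: "st F2 (0,0,0) \<omega> n = ((\<Sum>j<n. fst (\<omega> !! j)), real n, if \<exists>j<n. fst (\<omega> !! j) < 0 then 1 else 0)" for n
    by (rule st2_eq)
  have Enn: "fst (\<omega> !! j) \<ge> 0" for j
  proof (rule ccontr)
    assume "\<not> fst (\<omega> !! j) \<ge> 0"
    then have "V2 (st F2 (0,0,0) \<omega> (Suc j)) = \<infinity>" unfolding E2 V2_def by auto
    then show False using G2[of "Suc j"] by simp
  qed
  have Pow: "2 powr real n * exp (- (\<Sum>j<n. fst (\<omega> !! j))) < lam" for n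
  proof -
    have "V2 (st F2 (0,0,0) \<omega> n) = ennreal (2 powr real n * exp (- (\<Sum>j<n. fst (\<omega> !! j))))"
      unfolding E2 V2_def using Enn by (auto simp: not_less)
    then show ?thesis using G2[of n] by (simp add: ennreal_less_iff)
  qed
  have nonexpl: "\<exists>n. s < \<tau> (Suc n)"
  proof (rule ccontr)
    assume "\<not> (\<exists>n. s < \<tau> (Suc n))"
    then have tS: "\<tau> (Suc n) \<le> s" for n by (simp add: not_less)
    have tn: "\<tau> n \<le> s" for n
    proof (cases n)
      case 0 then show ?thesis using s by (simp add: \<tau>_def jtime_def)
    next
      case (Suc m) then show ?thesis using tS[of m] by simp
    qed
    define B where "B = 3/2*Z0*exp(r * s)"
    have XB: "X n \<le> B" for n
    proof -
      have "exp (r * \<tau> n) \<le> exp (r * s)" using tn[of n] r by (simp add: mult_left_mono)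
      then have "3/2*Z0*exp(r * \<tau> n) \<le> B" unfolding B_def using Z0 by (intro mult_left_mono) auto
      then show ?thesis using Xup[of n] by linarith
    qed
    have hold_eq: "hold r z0 \<omega> j = fst (\<omega> !! j) / ((2+r) * X j)" for j
      using jpos[of j] by (simp add: hold_def X_def Let_def)
    have Ej: "fst (\<omega> !! j) \<le> (2+r) * B * hold r z0 \<omega> j" for j
    proof -
      have "fst (\<omega> !! j) = (2+r) * X j * hold r z0 \<omega> j"
      proof -
        have "(2+r) * X j \<noteq> 0" using Xpos[of j] r by simp
        then show ?thesis unfolding hold_eq by simp
      qed
      also have "\<dots> \<le> (2+r) * B * hold r z0 \<omega> j"
        using XB[of j] r Enn[of j] Xpos[of j] unfolding hold_eq
        by (intro mult_right_mono mult_left_mono) auto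
      finally show ?thesis .
    qed
    define c where "c = (2+r) * B * s"
    have sig: "(\<Sum>j<n. fst (\<omega> !! j)) \<le> c" for n
    proof -
      have "(\<Sum>j<n. fst (\<omega> !! j)) \<le> (\<Sum>j<n. (2+r) * B * hold r z0 \<omega> j)" by (intro sum_mono Ej)
      also have "\<dots> = (2+r) * B * \<tau> n" by (simp add: \<tau>_def jtime_def sum_distrib_left)
      also have "\<dots> \<le> c"
      proof -
        have "B \<ge> 0" unfolding B_def using Z0 by simp
        then have "(2+r) * B \<ge> 0" using r by simp
        then show ?thesis unfolding c_def using tn[of n] by (intro mult_left_mono) auto
      qed
      finally show ?thesis .
    qed
    obtain n where n: "lam * exp c < 2 ^ n" using real_arch_pow[of 2] by auto
    have "2 ^ n * exp (-c) \<le> 2 powr real n * exp (- (\<Sum>j<n. fst (\<omega> !! j)))"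
      using sig[of n] by (simp add: powr_realpow)
    also have "\<dots> < lam" by (rule Pow)
    finally have "2 ^ n * exp (-c) < lam" .
    then have "2 ^ n * exp (-c) * exp c < lam * exp c" by (intro mult_strict_right_mono) auto
    moreover have "2 ^ n * exp (-c) * exp c = (2::real) ^ n" by (simp add: mult.assoc exp_add[symmetric])
    ultimately have "2 ^ n < lam * exp c" by simp
    then show False using n by simp
  qed
  define n0 where "n0 = (LEAST n. s < \<tau> (Suc n))"
  have n0: "s < \<tau> (Suc n0)" using nonexpl unfolding n0_def by (rule LeastI_ex)
  have n0le: "\<tau> n0 \<le> s"
  proof (cases n0)
    case 0 then show ?thesis using s by (simp add: \<tau>_def jtime_def)
  next
    case (Suc m)
    then have "m < n0" by simp
    then have "\<not> s < \<tau> (Suc m)" unfolding n0_def by (rule not_less_Least)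
    then show ?thesis using Suc by simp
  qed
  have bd: "real (bd_chain r z0 \<omega> s) = X n0"
    using nonexpl unfolding bd_chain_def X_def n0_def \<tau>_def by simp
  have up: "X n0 \<le> 3/2*Z0*exp(r * s)"
  proof -
    have "exp (r * \<tau> n0) \<le> exp (r * s)" using n0le r by (simp add: mult_left_mono)
    then have "3/2*Z0*exp(r * \<tau> n0) \<le> 3/2*Z0*exp(r * s)" using Z0 by (intro mult_left_mono) auto
    then show ?thesis using Xup[of n0] by linarith
  qed
  have "Z0/2*exp(r * s) \<le> X (Suc n0)"
  proof -
    have "exp (r * s) \<le> exp (r * \<tau> (Suc n0))" using n0 r by (simp add: mult_left_mono)
    then have "Z0/2*exp(r * s) \<le> Z0/2*exp(r * \<tau> (Suc n0))" using Z0 by (intro mult_left_mono) auto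
    then show ?thesis using Xlo[of "Suc n0"] by linarith
  qed
  moreover have "X (Suc n0) \<le> X n0 + 1"
    using jpos[of n0] by (auto simp: X_def Let_def)
  moreover have "X n0 \<ge> 1" using jpos[of n0] by (simp add: X_def)
  ultimately have lo: "Z0/4*exp(r * s) \<le> X n0" by linarith
  show ?thesis using up lo bd by simp
qed

lemma log_bound:
  fixes N :: nat and Z Z0 a b t \<delta> :: real
  assumes L: "ln (real N) > 0" and Z0: "Z0 > 0"
  and lo: "Z0/4 * exp(a*t*ln(real N)) \<le> Z" and up: "Z \<le> 3/2*Z0*exp(a*t*ln(real N))"
  and Q: "\<bar>ln Z0/ln(real N) - b\<bar> + ln 4/ln(real N) \<le> \<delta>" and w: "b + a*t \<ge> 0"
  shows "\<bar>logN_plus N Z - (b + a*t)\<bar> \<le> \<delta>"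
proof -
  define L where "L = ln (real N)"
  have Lp: "L > 0" using L by (simp add: L_def)
  have p1: "Z0/4 * exp(a*t*L) > 0" using Z0 by simp
  have Zp: "Z > 0" using lo p1 unfolding L_def by linarith
  have "ln (Z0/4 * exp(a*t*L)) \<le> ln Z" using lo p1 Zp unfolding L_def by (subst ln_le_cancel_iff) auto
  moreover have "ln (Z0/4 * exp(a*t*L)) = ln Z0 - ln 4 + a*t*L" using Z0 by (simp add: ln_mult ln_div)
  ultimately have l1: "ln Z0 - ln 4 + a*t*L \<le> ln Z" by simp
  have a1: "ln Z \<le> ln (3/2*Z0*exp(a*t*L))" using up Zp unfolding L_def by (subst ln_le_cancel_iff) auto
  have a2: "ln (3/2*Z0*exp(a*t*L)) = ln (3/2) + ln Z0 + a*t*L"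
  proof -
    have "ln (3/2*Z0*exp(a*t*L)) = ln (3/2*Z0) + ln (exp (a*t*L))" by (rule ln_mult_pos) (use Z0 in auto)
    also have "ln (3/2*Z0) = ln (3/2) + ln Z0" by (rule ln_mult_pos) (use Z0 in auto)
    finally show ?thesis by simp
  qed
  have a3: "ln (3/2::real) \<le> ln 4" by (subst ln_le_cancel_iff) auto
  have l2: "ln Z \<le> ln Z0 + ln 4 + a*t*L" using a1 a2 a3 by linarith
  have d: "\<bar>ln Z - ln Z0 - a*t*L\<bar> \<le> ln 4" using l1 l2 by linarith
  have "\<bar>ln Z / L - ln Z0 / L - a*t\<bar> = \<bar>ln Z - ln Z0 - a*t*L\<bar> / L"
    using Lp by (simp add: field_simps)
  also have "\<dots> \<le> ln 4 / L" using d Lp by (simp add: divide_right_mono)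
  finally have d2: "\<bar>ln Z / L - ln Z0 / L - a*t\<bar> \<le> ln 4 / L" .
  have lN: "logN N Z = ln Z / L" by (simp add: logN_def L_def)
  have "\<bar>logN N Z - (b + a*t)\<bar> \<le> \<delta>"
    using d2 Q unfolding lN L_def[symmetric] by linarith
  moreover have "logN_plus N Z = max (logN N Z) 0" using Zp by (simp add: logN_plus_def)
  ultimately show ?thesis using w by (simp add: max_def) linarith
qed

lemma prob_noise: "prob_space noise"
proof -
  interpret prob_space M0 by (rule prob_M0)
  show ?thesis unfolding noise_eq by (rule prob_space_stream_space)
qed

lemma A1_bound:
  fixes r :: real and z0 :: nat
  assumes r: "r > 0" and Z0: "real z0 > 0"
  defines "A1 \<equiv> {\<omega> \<in> space noise. \<exists>n. ennreal (real z0^2/4) \<le> ennreal (v1 (real z0) r (st (F1 r) (real z0, 0) \<omega> n))}"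
  shows "A1 \<in> sets noise" "measure noise A1 \<le> 4*(2+r)/(r*real z0)"
proof -
  interpret P: prob_space noise by (rule prob_noise)
  let ?Z = "real z0"
  have [measurable]: "(\<lambda>\<omega>. st (F1 r) (real z0, 0) \<omega> n) \<in> noise \<rightarrow>\<^sub>M B2" for n
    unfolding noise_eq by (rule st_meas[OF F1_meas]) (simp add: space_pair_measure)
  have [measurable]: "(\<lambda>s. ennreal (v1 ?Z r s)) \<in> borel_measurable B2" by (rule v1_meas)
  have "(\<lambda>\<omega>. ennreal (v1 ?Z r (st (F1 r) (real z0, 0) \<omega> n))) \<in> borel_measurable noise" for n
    by measurable
  then show "A1 \<in> sets noise" unfolding A1_def by measurable
  have "ennreal (?Z^2/4) * emeasure (stream_space M0) A1 \<le> ennreal (v1 ?Z r (?Z, 0))"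
    unfolding A1_def noise_eq
  proof (rule ville[where S = "{s. fst s \<in> \<nat>}"])
    show "prob_space M0" by (rule prob_M0)
    show "(\<lambda>(s, w). F1 r s w) \<in> B2 \<Otimes>\<^sub>M M0 \<rightarrow>\<^sub>M B2" by (rule F1_meas)
    show "(\<lambda>s. ennreal (v1 ?Z r s)) \<in> borel_measurable B2" by (rule v1_meas)
    show "F1 r s w \<in> {s. fst s \<in> \<nat>}" if "s \<in> {s. fst s \<in> \<nat>}" for s w
    proof -
      from that have "fst s \<in> \<nat>" by simp
      then obtain n where n: "fst s = real n" by (rule Nats_cases)
      show ?thesis
      proof (cases "n = 0")
        case True then show ?thesis using n by (simp add: F1_def)
      next
        case False
        then have "fst s - 1 = real (n - 1)" using n by (simp add: of_nat_diff)
        moreover have "fst s + 1 = real (n + 1)" using n by simp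
        moreover have "fst s \<noteq> 0" using n False by simp
        ultimately have "fst (F1 r s w) = real (n + 1) \<or> fst (F1 r s w) = real (n - 1)"
          unfolding F1_def by (simp only: if_False fst_conv split: if_split) simp
        then have "fst (F1 r s w) \<in> \<nat>" by (metis of_nat_in_Nats)
        then show ?thesis by simp
      qed
    qed
    show "{s. fst s \<in> \<nat>} \<subseteq> space B2" by (simp add: space_pair_measure)
    show "(\<integral>\<^sup>+w. ennreal (v1 ?Z r (F1 r s w)) \<partial>M0) \<le> ennreal (v1 ?Z r s)" if "s \<in> {s. fst s \<in> \<nat>}" for s
      using v1_sup[OF r] that by simp
    show "(?Z, 0) \<in> {s. fst s \<in> \<nat>}" by simp
  qed
  also have "v1 ?Z r (?Z, 0) = (2+r)/r * ?Z" by (simp add: v1_def)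
  finally have i1: "ennreal (?Z^2/4) * emeasure (stream_space M0) A1 \<le> ennreal ((2+r)/r * ?Z)" .
  have "emeasure (stream_space M0) A1 = ennreal (measure noise A1)"
    using P.emeasure_eq_measure[of A1] by (simp add: noise_eq)
  moreover have "ennreal (?Z^2/4 * measure noise A1) = ennreal (?Z^2/4) * ennreal (measure noise A1)"
    by (rule ennreal_mult) auto
  ultimately have "ennreal (?Z^2/4 * measure noise A1) \<le> ennreal ((2+r)/r * ?Z)"
    using i1 by simp
  moreover have "0 \<le> (2+r)/r * ?Z" using r Z0 by simp
  ultimately have i2: "?Z^2/4 * measure noise A1 \<le> (2+r)/r * ?Z"
    using ennreal_le_iff by blast
  have pos: "?Z^2/4 > 0" using Z0 by simp
  from i2 have "measure noise A1 * (?Z^2/4) \<le> (2+r)/r * ?Z" by (metis mult.commute)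
  then have "measure noise A1 \<le> ((2+r)/r * ?Z) / (?Z^2/4)"
    by (subst pos_le_divide_eq[OF pos])
  also have "((2+r)/r * ?Z) / (?Z^2/4) = 4*(2+r)/(r*?Z)"
    using r Z0 by (simp add: field_simps power2_eq_square)
  finally show "measure noise A1 \<le> 4*(2+r)/(r*?Z)" .
qed

lemma A2_bound:
  fixes lam :: real
  assumes lam: "lam > 0"
  defines "A2 \<equiv> {\<omega> \<in> space noise. \<exists>n. ennreal lam \<le> V2 (st F2 (0,0,0) \<omega> n)}"
  shows "A2 \<in> sets noise" "measure noise A2 \<le> 1/lam"
proof -
  interpret P: prob_space noise by (rule prob_noise)
  have [measurable]: "(\<lambda>\<omega>. st F2 (0,0,0) \<omega> n) \<in> noise \<rightarrow>\<^sub>M B3" for n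
    unfolding noise_eq by (rule st_meas[OF F2_meas]) (simp add: space_pair_measure)
  have [measurable]: "V2 \<in> borel_measurable B3" by (rule V2_meas)
  have "(\<lambda>\<omega>. V2 (st F2 (0,0,0) \<omega> n)) \<in> borel_measurable noise" for n
    by measurable
  then show "A2 \<in> sets noise" unfolding A2_def by measurable
  have "ennreal lam * emeasure (stream_space M0) A2 \<le> V2 (0,0,0)"
    unfolding A2_def noise_eq
  proof (rule ville[where S = UNIV and SM = B3])
    show "prob_space M0" by (rule prob_M0)
    show "(\<lambda>(s, w). F2 s w) \<in> B3 \<Otimes>\<^sub>M M0 \<rightarrow>\<^sub>M B3" by (rule F2_meas)
    show "V2 \<in> borel_measurable B3" by (rule V2_meas)
    show "F2 s w \<in> UNIV" for s w by simp
    show "UNIV \<subseteq> space B3" by (simp add: space_pair_measure)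
    show "(\<integral>\<^sup>+w. V2 (F2 s w) \<partial>M0) \<le> V2 s" for s by (rule V2_sup)
    show "(0,0,0) \<in> UNIV" by simp
  qed
  also have "V2 (0,0,0) = 1" by (simp add: V2_def)
  finally have i1: "ennreal lam * emeasure (stream_space M0) A2 \<le> 1" .
  have "emeasure (stream_space M0) A2 = ennreal (measure noise A2)"
    using P.emeasure_eq_measure[of A2] by (simp add: noise_eq)
  moreover have "ennreal (lam * measure noise A2) = ennreal lam * ennreal (measure noise A2)"
    by (rule ennreal_mult) (use lam in auto)
  ultimately have "ennreal (lam * measure noise A2) \<le> ennreal 1"
    using i1 by simp
  then have "lam * measure noise A2 \<le> 1"
    using ennreal_le_iff[of 1] by simp
  then have "measure noise A2 * lam \<le> 1" by (metis mult.commute)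
  then show "measure noise A2 \<le> 1/lam" using lam by (subst pos_le_divide_eq) auto
qed

lemma N_bound:
  fixes N :: nat and a b T \<delta> :: real and \<phi> :: "nat \<Rightarrow> real"
  assumes a: "a > 0" and phi: "0 < \<phi> N" "\<phi> N \<le> 1"
  and L2: "ln (real N) \<ge> 2"
  and Q: "\<bar>ln (real (nat \<lfloor>ln (real N) / \<phi> N\<rfloor>))/ln(real N) - b\<bar> + ln 4/ln(real N) \<le> \<delta>"
  and b: "b \<ge> 0"
  shows "measure noise (dev_event a b T \<delta> \<phi> N)
     \<le> 4*(2+a*\<phi> N)/(a*\<phi> N*real (nat \<lfloor>ln (real N) / \<phi> N\<rfloor>)) + 1/ln(real N)"
proof -
  interpret P: prob_space noise by (rule prob_noise)
  define L where "L = ln (real N)"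
  define r where "r = a * \<phi> N"
  define z0 where "z0 = nat \<lfloor>L / \<phi> N\<rfloor>"
  define Z0 where "Z0 = real z0"
  have Lp: "L > 0" using L2 by (simp add: L_def)
  have r: "r > 0" using a phi by (simp add: r_def)
  have "L / \<phi> N \<ge> L" using phi Lp by (simp add: le_divide_eq)
  then have "L / \<phi> N \<ge> 2" using L2 by (simp add: L_def)
  then have "\<lfloor>L / \<phi> N\<rfloor> \<ge> 2" by linarith
  then have Z0p: "Z0 > 0" unfolding Z0_def z0_def by simp
  define A1 where "A1 = {\<omega> \<in> space noise. \<exists>n. ennreal (real z0^2/4) \<le> ennreal (v1 (real z0) r (st (F1 r) (real z0, 0) \<omega> n))}"
  define A2 where "A2 = {\<omega> \<in> space noise. \<exists>n. ennreal L \<le> V2 (st F2 (0,0,0) \<omega> n)}"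
  have A1: "A1 \<in> sets noise" "measure noise A1 \<le> 4*(2+r)/(r*real z0)"
    using A1_bound[OF r, of z0] Z0p unfolding A1_def Z0_def by auto
  have A2: "A2 \<in> sets noise" "measure noise A2 \<le> 1/L"
    using A2_bound[OF Lp] unfolding A2_def by auto
  have sub: "dev_event a b T \<delta> \<phi> N \<subseteq> A1 \<union> A2"
  proof
    fix \<omega> assume dev: "\<omega> \<in> dev_event a b T \<delta> \<phi> N"
    show "\<omega> \<in> A1 \<union> A2"
    proof (rule ccontr)
      assume nA: "\<omega> \<notin> A1 \<union> A2"
      have sp: "\<omega> \<in> space noise" using dev by (simp add: dev_event_def)
      have G1: "v1 Z0 r (real (jchain r z0 \<omega> n), jtime r z0 \<omega> n) < Z0^2/4" for n
      proof -
        have "\<not> ennreal (real z0^2/4) \<le> ennreal (v1 (real z0) r (st (F1 r) (real z0, 0) \<omega> n))"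
          using nA sp unfolding A1_def by auto
        moreover have "0 \<le> v1 (real z0) r (st (F1 r) (real z0, 0) \<omega> n)"
          using r by (intro v1_nn) (simp_all add: st1_eq)
        ultimately show ?thesis using ennreal_le_iff by (auto simp: st1_eq Z0_def)
      qed
      have G2: "V2 (st F2 (0,0,0) \<omega> n) < ennreal L" for n
        using nA sp unfolding A2_def by (auto simp: not_le)
      from dev obtain t where t: "t \<in> {0..T}"
        and gt: "\<bar>logN_plus N (real (bd_chain r z0 \<omega> (t * L / \<phi> N))) - (b + a * t)\<bar> > \<delta>"
        unfolding dev_event_def r_def z0_def L_def by blast
      have s0: "t * L / \<phi> N \<ge> 0" using t Lp phi by simp
      have rs: "r * (t * L / \<phi> N) = a * t * L" using phi by (simp add: r_def)
      from det[OF r Z0_def Z0p s0 G1 G2]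
      have bds: "Z0/4 * exp(a*t*L) \<le> real (bd_chain r z0 \<omega> (t * L / \<phi> N))"
                "real (bd_chain r z0 \<omega> (t * L / \<phi> N)) \<le> 3/2*Z0*exp(a*t*L)"
        unfolding rs by auto
      have "\<bar>logN_plus N (real (bd_chain r z0 \<omega> (t * L / \<phi> N))) - (b + a * t)\<bar> \<le> \<delta>"
        using log_bound[of N Z0 a t "real (bd_chain r z0 \<omega> (t * L / \<phi> N))" b \<delta>]
          Lp Z0p bds Q b t a unfolding L_def Z0_def z0_def by auto
      then show False using gt by simp
    qed
  qed
  have "measure noise (dev_event a b T \<delta> \<phi> N) \<le> measure noise (A1 \<union> A2)"
    using sub A1(1) A2(1) by (intro P.finite_measure_mono) auto
  also have "\<dots> \<le> measure noise A1 + measure noise A2"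
    using A1(1) A2(1) by (intro measure_Un_le) (auto simp: P.emeasure_eq_measure)
  also have "\<dots> \<le> 4*(2+r)/(r*real z0) + 1/L" using A1(2) A2(2) by simp
  finally show ?thesis unfolding r_def z0_def L_def by (simp add: mult.assoc)
qed

theorem proposition3p2:
  fixes a b T \<delta> :: real and \<phi> :: "nat \<Rightarrow> real"
  assumes "a > 0"
    and "\<And>N. 0 < \<phi> N \<and> \<phi> N \<le> 1"
    and "((\<lambda>N. - logN N (\<phi> N)) \<longlongrightarrow> b) sequentially"
    and "0 \<le> b" and "b < 1"
    and "T > 0" and "\<delta> > 0"
  shows "(\<forall>N. dev_event a b T \<delta> \<phi> N \<in> sets noise)
         \<and> ((\<lambda>N. measure noise (dev_event a b T \<delta> \<phi> N)) \<longlongrightarrow> 0) sequentially"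
proof
  note a = assms(1) and phi = assms(2) and hb0 = assms(3) and b0 = assms(4) and dpos = assms(7)
  show "\<forall>N. dev_event a b T \<delta> \<phi> N \<in> sets noise"
    using phi by (intro allI dev_meas) auto
  define L where "L N = ln (real N)" for N :: nat
  define Z0 where "Z0 N = real (nat \<lfloor>L N / \<phi> N\<rfloor>)" for N
  have Linf: "filterlim L at_top sequentially"
    unfolding L_def by (rule filterlim_compose[OF ln_at_top filterlim_real_sequentially])
  have ev2: "eventually (\<lambda>N. 2 \<le> L N) sequentially"
    using Linf unfolding filterlim_at_top by blast
  have lnL: "((\<lambda>N. ln (L N) / L N) \<longlongrightarrow> 0) sequentially"
    by (rule filterlim_compose[OF ln_x_over_x_tendsto_0 Linf])
  have invL: "((\<lambda>N. 1 / L N) \<longlongrightarrow> 0) sequentially"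
    using tendsto_inverse_0_at_top[OF Linf] by (simp add: inverse_eq_divide)
  have hb: "((\<lambda>N. - ln (\<phi> N) / L N) \<longlongrightarrow> b) sequentially"
    using hb0 by (simp add: logN_def L_def)
  define u where "u N = ln (L N) / L N + (- ln (\<phi> N) / L N)" for N
  define l where "l N = u N - ln 2 * (1 / L N)" for N
  have ut: "(u \<longlongrightarrow> b) sequentially"
    unfolding u_def using tendsto_add[OF lnL hb] by simp
  have lt: "(l \<longlongrightarrow> b) sequentially"
    unfolding l_def using tendsto_diff[OF ut tendsto_mult[OF tendsto_const invL, of "ln 2"]] by simp
  have bounds: "l N \<le> ln (Z0 N) / L N \<and> ln (Z0 N) / L N \<le> u N" if L2: "2 \<le> L N" for N
  proof -
    have p: "0 < \<phi> N" "\<phi> N \<le> 1" using phi[of N] by auto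
    have Lp: "L N > 0" using L2 by simp
    have y2: "L N / \<phi> N \<ge> 2"
    proof -
      have "L N / \<phi> N \<ge> L N" using p Lp by (simp add: le_divide_eq)
      then show ?thesis using L2 by simp
    qed
    have fl: "Z0 N \<le> L N / \<phi> N" "L N / \<phi> N - 1 \<le> Z0 N"
      using y2 unfolding Z0_def by (auto simp: of_nat_nat)
    have Zp: "Z0 N > 0" using fl y2 by simp
    have "ln (Z0 N) \<le> ln (L N / \<phi> N)" using fl Zp by (subst ln_le_cancel_iff) auto
    also have "ln (L N / \<phi> N) = ln (L N) - ln (\<phi> N)" using p Lp by (simp add: ln_div)
    finally have up: "ln (Z0 N) \<le> ln (L N) - ln (\<phi> N)" .
    have "L N / (2 * \<phi> N) \<le> Z0 N" using fl y2 p by (simp add: field_simps)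
    then have "ln (L N / (2 * \<phi> N)) \<le> ln (Z0 N)" using Zp p Lp by (subst ln_le_cancel_iff) auto
    moreover have "ln (L N / (2 * \<phi> N)) = ln (L N) - ln (\<phi> N) - ln 2"
      using p Lp by (simp add: ln_div ln_mult_pos)
    ultimately have lo: "ln (L N) - ln (\<phi> N) - ln 2 \<le> ln (Z0 N)" by simp
    have "ln (Z0 N) / L N \<le> (ln (L N) - ln (\<phi> N)) / L N" using up Lp by (simp add: divide_right_mono)
    moreover have "(ln (L N) - ln (\<phi> N) - ln 2) / L N \<le> ln (Z0 N) / L N" using lo Lp by (simp add: divide_right_mono)
    ultimately show ?thesis unfolding l_def u_def by (simp add: diff_divide_distrib)
  qed
  have Rt: "((\<lambda>N. ln (Z0 N) / L N) \<longlongrightarrow> b) sequentially"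
  proof (rule tendsto_sandwich[OF _ _ lt ut])
    show "eventually (\<lambda>N. l N \<le> ln (Z0 N) / L N) sequentially"
      using ev2 by eventually_elim (use bounds in blast)
    show "eventually (\<lambda>N. ln (Z0 N) / L N \<le> u N) sequentially"
      using ev2 by eventually_elim (use bounds in blast)
  qed
  have Qt: "((\<lambda>N. \<bar>ln (Z0 N) / L N - b\<bar> + ln 4 * (1 / L N)) \<longlongrightarrow> 0) sequentially"
    using tendsto_add[OF tendsto_rabs[OF tendsto_diff[OF Rt tendsto_const[of b]]] tendsto_mult[OF tendsto_const invL, of "ln 4"]]
    by simp
  have evQ: "eventually (\<lambda>N. \<bar>ln (Z0 N) / L N - b\<bar> + ln 4 * (1 / L N) < \<delta>) sequentially"
    using order_tendstoD(2)[OF Qt dpos] .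
  define K where "K = 8*(2+a)/a + 1"
  have evB: "eventually (\<lambda>N. measure noise (dev_event a b T \<delta> \<phi> N) \<le> K * (1 / L N)) sequentially"
    using ev2 evQ
  proof eventually_elim
    case (elim N)
    have p: "0 < \<phi> N" "\<phi> N \<le> 1" using phi[of N] by auto
    have Lp: "L N > 0" using elim by simp
    have y2: "L N / \<phi> N \<ge> 2"
    proof -
      have "L N / \<phi> N \<ge> L N" using p Lp by (simp add: le_divide_eq)
      then show ?thesis using elim by simp
    qed
    have fl: "L N / \<phi> N - 1 \<le> Z0 N"
      using y2 unfolding Z0_def by (auto simp: of_nat_nat)
    have pz: "\<phi> N * Z0 N \<ge> L N / 2"
    proof -
      have "\<phi> N * Z0 N \<ge> \<phi> N * (L N / \<phi> N - 1)" using fl p by (intro mult_left_mono) auto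
      also have "\<phi> N * (L N / \<phi> N - 1) = L N - \<phi> N" using p by (simp add: field_simps)
      finally show ?thesis using p elim by simp
    qed
    have Q: "\<bar>ln (real (nat \<lfloor>ln (real N) / \<phi> N\<rfloor>))/ln(real N) - b\<bar> + ln 4/ln(real N) \<le> \<delta>"
      using elim(2) unfolding Z0_def L_def by simp
    have L2: "ln (real N) \<ge> 2" using elim(1) by (simp add: L_def)
    have "measure noise (dev_event a b T \<delta> \<phi> N) \<le> 4*(2+a*\<phi> N)/(a*\<phi> N*Z0 N) + 1/L N"
      using N_bound[where \<phi>=\<phi> and N=N, OF a p L2 Q b0] unfolding Z0_def L_def by simp
    also have "4*(2+a*\<phi> N)/(a*\<phi> N*Z0 N) \<le> 4*(2+a)/(a*(L N/2))"
    proof (rule frac_le)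
      show "0 \<le> 4*(2+a)" using a by simp
      show "4*(2+a*\<phi> N) \<le> 4*(2+a)" using a p by (simp add: mult_left_le)
      show "0 < a*(L N/2)" using a Lp by simp
      show "a*(L N/2) \<le> a*\<phi> N*Z0 N" using pz a by (simp add: mult.assoc mult_left_mono)
    qed
    also have "4*(2+a)/(a*(L N/2)) + 1/L N = K * (1 / L N)"
      unfolding K_def using a Lp by (simp add: field_simps)
    finally show ?case by simp
  qed
  have "((\<lambda>N. K * (1 / L N)) \<longlongrightarrow> K * 0) sequentially"
    by (intro tendsto_mult tendsto_const invL)
  then have Kt: "((\<lambda>N. K * (1 / L N)) \<longlongrightarrow> 0) sequentially" by simp
  show "((\<lambda>N. measure noise (dev_event a b T \<delta> \<phi> N)) \<longlongrightarrow> 0) sequentially"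
    by (rule tendsto_sandwich[OF _ evB tendsto_const Kt]) (simp add: measure_nonneg)
qed

end
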